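(* Let $M$ be a matroid on $E$ whose dual is transversal with presentation $\mathcal A=(A_1,\ldots,A_r)$, $r=r^*(M)$, and let $e\in E$. Let $X\subseteq E-e$. Then $$r_{M\backslash e}(X)\le |X|-|\mathcal A(X)|-\max\{|\mathcal A_e(X\cup\{e\})|-1,\,0\},$$ with equality if $X$ is a cyclic flat of $M\backslash e$.
   Context: $M^*=M[\mathcal A]$, the transversal matroid whose independent sets are the partial transversals of $\mathcal A$; $r^*(M)$ is the rank of $M^*$. For $Y\subseteq E$: $\mathcal A(Y)=\{i\in[r]:A_i\subseteq Y\}$ and $\mathcal A_e(Y)=\{i\in\mathcal A(Y): e\in A_i\}$. A cyclic flat is a flat that is a union of circuits. *)

theory Defs
  imports Main
begin

definition matroid :: "'a set \<Rightarrow> ('a set \<Rightarrow> bool) \<Rightarrow> bool" where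
  "matroid E indep \<longleftrightarrow> finite E \<and> (\<forall>I. indep I \<longrightarrow> I \<subseteq> E) \<and> indep {} \<and>
     (\<forall>I J. indep J \<and> I \<subseteq> J \<longrightarrow> indep I) \<and>
     (\<forall>I J. indep I \<and> indep J \<and> card I < card J \<longrightarrow> (\<exists>x\<in>J - I. indep (insert x I)))"

definition basis :: "'a set \<Rightarrow> ('a set \<Rightarrow> bool) \<Rightarrow> 'a set \<Rightarrow> bool" where
  "basis E indep B \<longleftrightarrow> indep B \<and> (\<forall>x\<in>E - B. \<not> indep (insert x B))"

definition rank :: "('a set \<Rightarrow> bool) \<Rightarrow> 'a set \<Rightarrow> nat" where
  "rank indep X = Max (card ` {I. I \<subseteq> X \<and> indep I})"

definition dual_indep :: "'a set \<Rightarrow> ('a set \<Rightarrow> bool) \<Rightarrow> 'a set \<Rightarrow> bool" where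
  "dual_indep E indep I \<longleftrightarrow> I \<subseteq> E \<and> (\<exists>B. basis E indep B \<and> I \<inter> B = {})"

text \<open>Deletion M \ e (ground set E - {e}).\<close>
definition del_indep :: "('a set \<Rightarrow> bool) \<Rightarrow> 'a \<Rightarrow> 'a set \<Rightarrow> bool" where
  "del_indep indep e I \<longleftrightarrow> indep I \<and> e \<notin> I"

definition partial_transversal :: "(nat \<Rightarrow> 'a set) \<Rightarrow> nat \<Rightarrow> 'a set \<Rightarrow> bool" where
  "partial_transversal A r I \<longleftrightarrow>
     (\<exists>f. inj_on f I \<and> (\<forall>x\<in>I. f x < r \<and> x \<in> A (f x)))"

definition circuit :: "'a set \<Rightarrow> ('a set \<Rightarrow> bool) \<Rightarrow> 'a set \<Rightarrow> bool" where
  "circuit E indep C \<longleftrightarrow> C \<subseteq> E \<and> \<not> indep C \<and> (\<forall>x\<in>C. indep (C - {x}))"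

definition flat :: "'a set \<Rightarrow> ('a set \<Rightarrow> bool) \<Rightarrow> 'a set \<Rightarrow> bool" where
  "flat E indep X \<longleftrightarrow> X \<subseteq> E \<and> (\<forall>y\<in>E - X. rank indep (insert y X) > rank indep X)"

text \<open>Cyclic set: a union of circuits.\<close>
definition cyclic :: "'a set \<Rightarrow> ('a set \<Rightarrow> bool) \<Rightarrow> 'a set \<Rightarrow> bool" where
  "cyclic E indep X \<longleftrightarrow> (\<forall>x\<in>X. \<exists>C. circuit E indep C \<and> x \<in> C \<and> C \<subseteq> X)"

definition cyclic_flat :: "'a set \<Rightarrow> ('a set \<Rightarrow> bool) \<Rightarrow> 'a set \<Rightarrow> bool" where
  "cyclic_flat E indep X \<longleftrightarrow> flat E indep X \<and> cyclic E indep X"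

definition calA :: "(nat \<Rightarrow> 'a set) \<Rightarrow> nat \<Rightarrow> 'a set \<Rightarrow> nat set" where
  "calA A r Y = {i. i < r \<and> A i \<subseteq> Y}"

definition calAe :: "(nat \<Rightarrow> 'a set) \<Rightarrow> nat \<Rightarrow> 'a \<Rightarrow> 'a set \<Rightarrow> nat set" where
  "calAe A r e Y = {i \<in> calA A r Y. e \<in> A i}"

end

theory Submission imports Defs begin

lemma hall:
  fixes B :: "nat \<Rightarrow> 'a set"
  assumes "finite S" "finite Ind"
    and "\<forall>K\<subseteq>S. card K \<le> card {i\<in>Ind. B i \<inter> K \<noteq> {}}"
  shows "\<exists>f. inj_on f S \<and> (\<forall>x\<in>S. f x \<in> Ind \<and> x \<in> B (f x))"
  using assms
proof (induction "card S" arbitrary: S Ind rule: less_induct)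
  case less
  show ?case
  proof (cases "S = {}")
    case True then show ?thesis by auto
  next
    case False
    show ?thesis
    proof (cases "\<exists>K. K \<subseteq> S \<and> K \<noteq> {} \<and> K \<noteq> S \<and> card K = card {i\<in>Ind. B i \<inter> K \<noteq> {}}")
      case True
      then obtain K where K: "K \<subseteq> S" "K \<noteq> {}" "K \<noteq> S"
        and tight: "card K = card {i\<in>Ind. B i \<inter> K \<noteq> {}}" by blast
      define NK where "NK = {i\<in>Ind. B i \<inter> K \<noteq> {}}"
      have fK: "finite K" using K less.prems finite_subset by blast
      have "K \<subset> S" using K by blast
      then have cK: "card K < card S" using less.prems(1) by (rule psubset_card_mono[rotated])
      have hK: "\<forall>L\<subseteq>K. card L \<le> card {i\<in>Ind. B i \<inter> L \<noteq> {}}"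
        using less.prems(3) K(1) by blast
      obtain f1 where f1: "inj_on f1 K" "\<forall>x\<in>K. f1 x \<in> Ind \<and> x \<in> B (f1 x)"
        using less.hyps[OF cK fK less.prems(2) hK] by blast
      have "S - K \<subset> S" using K by blast
      then have cSK: "card (S - K) < card S" using less.prems(1) by (rule psubset_card_mono[rotated])
      have hallSK: "\<forall>L\<subseteq>S-K. card L \<le> card {i\<in>Ind - NK. B i \<inter> L \<noteq> {}}"
      proof (intro allI impI)
        fix L assume L: "L \<subseteq> S - K"
        have fL: "finite L" using L less.prems(1) finite_subset by blast
        have eq1: "{i\<in>Ind - NK. B i \<inter> L \<noteq> {}} = {i\<in>Ind. B i \<inter> (L \<union> K) \<noteq> {}} - NK"
          by (auto simp: NK_def)
        have sub: "NK \<subseteq> {i\<in>Ind. B i \<inter> (L \<union> K) \<noteq> {}}" by (auto simp: NK_def)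
        have fin: "finite {i\<in>Ind. B i \<inter> (L \<union> K) \<noteq> {}}" using less.prems(2) by simp
        have c1: "card {i\<in>Ind - NK. B i \<inter> L \<noteq> {}} = card {i\<in>Ind. B i \<inter> (L \<union> K) \<noteq> {}} - card NK"
          using eq1 sub fin by (simp add: card_Diff_subset finite_subset)
        have c2: "card (L \<union> K) \<le> card {i\<in>Ind. B i \<inter> (L \<union> K) \<noteq> {}}"
          using less.prems(3) L K by (meson Diff_subset Un_least dual_order.trans)
        have c3: "card (L \<union> K) = card L + card K" using L fL fK by (subst card_Un_disjoint) auto
        show "card L \<le> card {i\<in>Ind - NK. B i \<inter> L \<noteq> {}}"
          using c1 c2 c3 tight NK_def by simp
      qed
      obtain f2 where f2: "inj_on f2 (S-K)" "\<forall>x\<in>S-K. f2 x \<in> Ind - NK \<and> x \<in> B (f2 x)"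
        using less.hyps[OF cSK _ _ hallSK] less.prems(1,2) by auto
      define f where "f x = (if x \<in> K then f1 x else f2 x)" for x
      show ?thesis
      proof (intro exI conjI)
        show "inj_on f S" unfolding inj_on_def
        proof (intro ballI impI)
          fix x y assume xy: "x\<in>S" "y\<in>S" "f x = f y"
          show "x = y"
          proof (cases "x \<in> K"; cases "y \<in> K")
            assume "x \<in> K" "y \<in> K" then show ?thesis using xy f1 by (auto simp: f_def inj_on_def)
          next
            assume a: "x \<in> K" "y \<notin> K"
            then have "f x \<in> NK" using f1 by (auto simp: f_def NK_def)
            moreover have "y \<in> S - K" using a xy by blast
            then have "f2 y \<notin> NK" using f2(2) by blast
            then have "f y \<notin> NK" using a by (simp add: f_def)
            ultimately show ?thesis using xy by simp
          next
            assume a: "x \<notin> K" "y \<in> K"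
            then have "f y \<in> NK" using f1 by (auto simp: f_def NK_def)
            moreover have "x \<in> S - K" using a xy by blast
            then have "f2 x \<notin> NK" using f2(2) by blast
            then have "f x \<notin> NK" using a by (simp add: f_def)
            ultimately show ?thesis using xy by simp
          next
            assume "x \<notin> K" "y \<notin> K" then show ?thesis using xy f2 by (auto simp: f_def inj_on_def)
          qed
        qed
        show "\<forall>x\<in>S. f x \<in> Ind \<and> x \<in> B (f x)" using f1 f2 by (auto simp: f_def)
      qed
    next
      case nt: False
      obtain x where x: "x \<in> S" using False by blast
      have "card {x} \<le> card {i\<in>Ind. B i \<inter> {x} \<noteq> {}}" using less.prems(3) x by blast
      then have "0 < card {i\<in>Ind. B i \<inter> {x} \<noteq> {}}" by simp
      have "{i\<in>Ind. B i \<inter> {x} \<noteq> {}} \<noteq> {}" 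
      proof
        assume eq: "{i\<in>Ind. B i \<inter> {x} \<noteq> {}} = {}"
        have "card {i\<in>Ind. B i \<inter> {x} \<noteq> {}} = 0" by (simp only: eq card.empty)
        with \<open>0 < card {i\<in>Ind. B i \<inter> {x} \<noteq> {}}\<close> show False by simp
      qed
      then obtain i where i: "i \<in> Ind" "x \<in> B i" by auto
      have cS: "card (S - {x}) < card S" by (rule card_Diff1_less[OF less.prems(1) x])
      have hall2: "\<forall>L\<subseteq>S-{x}. card L \<le> card {j\<in>Ind - {i}. B j \<inter> L \<noteq> {}}"
      proof (intro allI impI)
        fix L assume L: "L \<subseteq> S - {x}"
        show "card L \<le> card {j\<in>Ind - {i}. B j \<inter> L \<noteq> {}}"
        proof (cases "L = {}")
          case True then show ?thesis by simp
        next
          case False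
          have "L \<noteq> S" using L x by blast
          then have "card L \<noteq> card {j\<in>Ind. B j \<inter> L \<noteq> {}}" using nt L False by blast
          moreover have "card L \<le> card {j\<in>Ind. B j \<inter> L \<noteq> {}}" using less.prems(3) L by blast
          ultimately have lt: "card L < card {j\<in>Ind. B j \<inter> L \<noteq> {}}" by simp
          have eq: "{j\<in>Ind - {i}. B j \<inter> L \<noteq> {}} = {j\<in>Ind. B j \<inter> L \<noteq> {}} - {i}" by auto
          have "card ({j\<in>Ind. B j \<inter> L \<noteq> {}} - {i}) \<ge> card {j\<in>Ind. B j \<inter> L \<noteq> {}} - 1"
            by (simp add: card_Diff_singleton_if)
          then show ?thesis using lt by (simp only: eq)
        qed
      qed
      obtain f2 where f2: "inj_on f2 (S - {x})" "\<forall>y\<in>S-{x}. f2 y \<in> Ind - {i} \<and> y \<in> B (f2 y)"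
        using less.hyps[OF cS _ _ hall2] less.prems(1,2) by auto
      define f where "f = f2(x := i)"
      show ?thesis
      proof (intro exI conjI)
        show "inj_on f S" unfolding inj_on_def
        proof (intro ballI impI)
          fix y z assume yz: "y\<in>S" "z\<in>S" "f y = f z"
          show "y = z"
          proof (cases "y = x"; cases "z = x")
            assume "y \<noteq> x" "z \<noteq> x" then show ?thesis using yz f2 by (auto simp: f_def inj_on_def)
          next
            assume a: "y = x" "z \<noteq> x"
            then have "z \<in> S - {x}" using yz by blast
            then have "f2 z \<noteq> i" using f2(2) by blast
            then show ?thesis using a yz by (simp add: f_def)
          next
            assume a: "y \<noteq> x" "z = x"
            then have "y \<in> S - {x}" using yz by blast
            then have "f2 y \<noteq> i" using f2(2) by blast
            then show ?thesis using a yz by (simp add: f_def)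
          next
            assume a: "y = x" "z = x" then show ?thesis by simp
          qed
        qed
        show "\<forall>y\<in>S. f y \<in> Ind \<and> y \<in> B (f y)" using f2 i by (auto simp: f_def)
      qed
    qed
  qed
qed


definition nb :: "(nat \<Rightarrow> 'a set) \<Rightarrow> nat \<Rightarrow> 'a set \<Rightarrow> nat set" where
  "nb A r K = {i. i < r \<and> A i \<inter> K \<noteq> {}}"

lemma nb_sub: "nb A r K \<subseteq> {..<r}" by (auto simp: nb_def)
lemma nb_fin: "finite (nb A r K)" by (rule finite_subset[OF nb_sub]) simp
lemma nb_le: "card (nb A r K) \<le> r"
  using card_mono[OF _ nb_sub, of r A K] by simp

lemma pt_bound:
  assumes "partial_transversal A r J" "finite J"
  shows "card J \<le> card (J - K) + card (nb A r K)"
proof -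
  obtain f where f: "inj_on f J" "\<forall>x\<in>J. f x < r \<and> x \<in> A (f x)"
    using assms(1) unfolding partial_transversal_def by blast
  have "f ` (J \<inter> K) \<subseteq> nb A r K" using f by (auto simp: nb_def)
  then have "card (f ` (J \<inter> K)) \<le> card (nb A r K)" by (rule card_mono[OF nb_fin])
  moreover have "card (f ` (J \<inter> K)) = card (J \<inter> K)"
    by (rule card_image[OF inj_on_subset[OF f(1)]]) blast
  moreover have "card J = card (J \<inter> K) + card (J - K)" by (rule card_Int_Diff[OF assms(2)])
  ultimately show ?thesis by linarith
qed

lemma konig:
  assumes "finite S"
  shows "\<exists>K\<subseteq>S. \<exists>J\<subseteq>S. partial_transversal A r J \<and> card S + card (nb A r K) \<le> card J + card K"
proof -
  define g where "g K = card K + r - card (nb A r K)" for K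
  have gb: "\<forall>K. K \<subseteq> S \<longrightarrow> g K < card S + r + 1"
  proof (intro allI impI)
    fix K assume "K \<subseteq> S"
    then have "card K \<le> card S" using card_mono[OF assms] by blast
    then show "g K < card S + r + 1" by (simp add: g_def)
  qed
  obtain K0 where K0: "K0 \<subseteq> S" "\<forall>K. K \<subseteq> S \<longrightarrow> g K \<le> g K0"
    using ex_has_greatest_nat[of "\<lambda>K. K \<subseteq> S" "{}" g "card S + r + 1", OF _ gb] by blast
  have "nb A r {} = {}" by (simp add: nb_def)
  then have "g {} = r" by (simp add: g_def)
  then have "r \<le> g K0" using K0(2)[rule_format, of "{}"] by simp
  then have ge: "card (nb A r K0) \<le> card K0" using nb_le[of A r K0] by (simp add: g_def)
  define d where "d = card K0 - card (nb A r K0)"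
  define Bf where "Bf i = (if i < r then A i else S)" for i
  have hallc: "\<forall>K\<subseteq>S. card K \<le> card {i\<in>{..<r+d}. Bf i \<inter> K \<noteq> {}}"
  proof (intro allI impI)
    fix K assume K: "K \<subseteq> S"
    show "card K \<le> card {i\<in>{..<r+d}. Bf i \<inter> K \<noteq> {}}"
    proof (cases "K = {}")
      case True then show ?thesis by simp
    next
      case False
      have eq: "{i\<in>{..<r+d}. Bf i \<inter> K \<noteq> {}} = nb A r K \<union> {r..<r+d}"
      proof (rule set_eqI)
        fix i
        have SK: "S \<inter> K \<noteq> {}" using False K by blast
        show "i \<in> {i\<in>{..<r+d}. Bf i \<inter> K \<noteq> {}} \<longleftrightarrow> i \<in> nb A r K \<union> {r..<r+d}"
          by (cases "i < r") (simp_all add: Bf_def nb_def SK)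
      qed
      have c: "card (nb A r K \<union> {r..<r+d}) = card (nb A r K) + d"
        proof (subst card_Un_disjoint)
        show "nb A r K \<inter> {r..<r + d} = {}" by (auto simp: nb_def)
      qed (simp_all add: nb_fin)
      have "g K \<le> g K0" using K0 K by blast
      then have "card K \<le> card (nb A r K) + d"
      proof -
        have e1: "g K + card (nb A r K) = card K + r" using nb_le[of A r K] by (simp add: g_def)
        have e2: "g K0 + card (nb A r K0) = card K0 + r" using nb_le[of A r K0] by (simp add: g_def)
        have e3: "d + card (nb A r K0) = card K0" using ge by (simp add: d_def)
        show ?thesis using e1 e2 e3 \<open>g K \<le> g K0\<close> by linarith
      qed
      then show ?thesis using eq c by simp
    qed
  qed
  obtain f where f: "inj_on f S" "\<forall>x\<in>S. f x \<in> {..<r+d} \<and> x \<in> Bf (f x)"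
    using hall[OF assms finite_lessThan hallc] by blast
  define J where "J = {x\<in>S. f x < r}"
  have ptJ: "partial_transversal A r J" unfolding partial_transversal_def
  proof (intro exI conjI)
    show "inj_on f J" by (rule inj_on_subset[OF f(1)]) (auto simp: J_def)
    show "\<forall>x\<in>J. f x < r \<and> x \<in> A (f x)" using f(2) by (auto simp: J_def Bf_def)
  qed
  have "f ` (S - J) \<subseteq> {r..<r+d}" using f(2) by (auto simp: J_def)
  then have "card (f ` (S - J)) \<le> d" using card_mono[of "{r..<r+d}" "f ` (S - J)"] by simp
  moreover have "card (f ` (S - J)) = card (S - J)"
    by (rule card_image[OF inj_on_subset[OF f(1)]]) blast
  moreover have "card S = card (S \<inter> J) + card (S - J)" by (rule card_Int_Diff[OF assms])
  moreover have "S \<inter> J = J" by (auto simp: J_def)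
  moreover have "card K0 \<le> card S" using K0 card_mono[OF assms] by blast
  ultimately have "card S + card (nb A r K0) \<le> card J + card K0" using ge by (simp add: d_def)
  moreover have "J \<subseteq> S" by (auto simp: J_def)
  ultimately show ?thesis using K0 ptJ by blast
qed

lemma cyc:
  assumes "finite F"
    and nc: "\<forall>x\<in>F. \<forall>J\<subseteq>F. partial_transversal A r J \<longrightarrow>
               (\<exists>J'\<subseteq>F-{x}. partial_transversal A r J' \<and> card J \<le> card J')"
  shows "\<exists>J\<subseteq>F. partial_transversal A r J \<and> card (nb A r F) \<le> card J"
proof -
  obtain K J where K: "K \<subseteq> F" "J \<subseteq> F" "partial_transversal A r J"
    "card F + card (nb A r K) \<le> card J + card K"
    using konig[OF assms(1), of A r] by blast
  have "K = F"
  proof (rule ccontr)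
    assume "K \<noteq> F"
    then obtain x where x: "x \<in> F" "x \<notin> K" using K by blast
    obtain J' where J': "J' \<subseteq> F - {x}" "partial_transversal A r J'" "card J \<le> card J'"
      using nc[rule_format, OF x(1) K(2) K(3)] by blast
    have fJ': "finite J'" using J' assms(1) finite_subset by blast
    have "card J' \<le> card (J' - K) + card (nb A r K)" by (rule pt_bound[OF J'(2) fJ'])
    moreover have "card (J' - K) \<le> card ((F - K) - {x})"
    proof (rule card_mono)
      show "finite ((F - K) - {x})" using assms(1) by simp
      show "J' - K \<subseteq> (F - K) - {x}" using J'(1) by blast
    qed
    moreover have "card ((F - K) - {x}) = card (F - K) - 1" using x by simp
    moreover have "card (F - K) > 0" by (rule card_gt_0_iff[THEN iffD2]) (use x assms(1) in auto)
    moreover have "card F = card K + card (F - K)"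
    proof -
      have "F \<inter> K = K" using K by blast
      then show ?thesis using card_Int_Diff[OF assms(1), of K] by simp
    qed
    ultimately show False using K(4) J'(3) by linarith
  qed
  then show ?thesis using K by auto
qed


section \<open>Generic rank facts\<close>

lemma rk_fin:
  assumes "finite E" "\<forall>I. P I \<longrightarrow> I \<subseteq> E"
  shows "finite {I. I \<subseteq> X \<and> P I}"
  by (rule finite_subset[of _ "Pow E"]) (use assms in auto)

lemma rk_ge:
  assumes "finite E" "\<forall>I. P I \<longrightarrow> I \<subseteq> E" "P I" "I \<subseteq> X"
  shows "card I \<le> rank P X"
  unfolding rank_def
  by (rule Max_ge) (use finite_imageI[OF rk_fin[OF assms(1,2)]] assms(3,4) in auto)

lemma rk_obtain:
  assumes "finite E" "\<forall>I. P I \<longrightarrow> I \<subseteq> E" "P {}"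
  shows "\<exists>I. I \<subseteq> X \<and> P I \<and> card I = rank P X"
proof -
  have "rank P X \<in> card ` {I. I \<subseteq> X \<and> P I}" unfolding rank_def
    by (rule Max_in) (use finite_imageI[OF rk_fin[OF assms(1,2)]] assms(3) in auto)
  then show ?thesis by auto
qed

lemma rk_obtainE:
  assumes "finite E" "\<forall>I. P I \<longrightarrow> I \<subseteq> E" "P {}"
  obtains I where "I \<subseteq> X" "P I" "card I = rank P X"
  using rk_obtain[OF assms, of X] by blast

lemma rk_insert:
  assumes "finite E" "\<forall>I. P I \<longrightarrow> I \<subseteq> E" "P {}" "\<forall>I J. P J \<and> I \<subseteq> J \<longrightarrow> P I"
  shows "rank P (insert y X) \<le> rank P X + 1"
proof -
  obtain I where I: "I \<subseteq> insert y X" "P I" "card I = rank P (insert y X)"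
    using rk_obtain[OF assms(1-3)] by blast
  have "P (I - {y})" using assms(4) I(2) by blast
  moreover have "I - {y} \<subseteq> X" using I(1) by blast
  ultimately have "card (I - {y}) \<le> rank P X" by (rule rk_ge[OF assms(1,2)])
  moreover have "card I \<le> card (I - {y}) + 1" by (simp add: card_Diff_singleton_if) arith
  ultimately show ?thesis using I(3) by linarith
qed

section \<open>Matroid facts\<close>

lemma m_parts:
  assumes "matroid E indep"
  shows "finite E" "\<forall>I. indep I \<longrightarrow> I \<subseteq> E" "indep {}"
    "\<forall>I J. indep J \<and> I \<subseteq> J \<longrightarrow> indep I"
    "\<forall>I J. indep I \<and> indep J \<and> card I < card J \<longrightarrow> (\<exists>x\<in>J - I. indep (insert x I))"
proof -
  note c = assms[unfolded matroid_def]
  show "finite E" using c by (elim conjE) assumption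
  show "\<forall>I. indep I \<longrightarrow> I \<subseteq> E" using c by (elim conjE) assumption
  show "indep {}" using c by (elim conjE) assumption
  show "\<forall>I J. indep J \<and> I \<subseteq> J \<longrightarrow> indep I" using c by (elim conjE) assumption
  show "\<forall>I J. indep I \<and> indep J \<and> card I < card J \<longrightarrow> (\<exists>x\<in>J - I. indep (insert x I))"
    using c by (elim conjE) assumption
qed

lemma m_extend:
  assumes M: "matroid E indep" and "indep I" "I \<subseteq> X"
  shows "\<exists>J. I \<subseteq> J \<and> J \<subseteq> X \<and> indep J \<and> card J = rank indep X"
proof -
  note fin = m_parts(1)[OF M] and sub = m_parts(2)[OF M] and emp = m_parts(3)[OF M]
    and aug = m_parts(5)[OF M]
  have bd: "\<forall>J. I \<subseteq> J \<and> J \<subseteq> X \<and> indep J \<longrightarrow> card J < card E + 1"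
  proof (intro allI impI)
    fix J assume "I \<subseteq> J \<and> J \<subseteq> X \<and> indep J"
    then have "J \<subseteq> E" using sub by blast
    then have "card J \<le> card E" by (rule card_mono[OF fin])
    then show "card J < card E + 1" by simp
  qed
  obtain J where J: "I \<subseteq> J \<and> J \<subseteq> X \<and> indep J"
    and mx: "\<forall>J'. I \<subseteq> J' \<and> J' \<subseteq> X \<and> indep J' \<longrightarrow> card J' \<le> card J"
    using ex_has_greatest_nat[of "\<lambda>J. I \<subseteq> J \<and> J \<subseteq> X \<and> indep J" I card "card E + 1", OF _ bd]
      assms(2,3) by blast
  have le: "card J \<le> rank indep X" using rk_ge[OF fin sub, of J X] J by simp
  have "\<not> card J < rank indep X"
  proof
    assume lt: "card J < rank indep X"
    obtain J0 where J0: "J0 \<subseteq> X" "indep J0" "card J0 = rank indep X"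
      using rk_obtain[OF fin sub emp] by blast
    have "indep J \<and> indep J0 \<and> card J < card J0" using J J0 lt by simp
    then obtain x where x: "x \<in> J0 - J" "indep (insert x J)"
      using aug[rule_format] by blast
    have "J \<subseteq> E" using J sub by blast
    then have fJ: "finite J" using fin by (rule finite_subset)
    have "card (insert x J) = card J + 1" using x fJ by simp
    moreover have "I \<subseteq> insert x J \<and> insert x J \<subseteq> X \<and> indep (insert x J)" using J J0 x by blast
    then have "card (insert x J) \<le> card J" using mx[rule_format] by blast
    ultimately show False by simp
  qed
  then show ?thesis using J le by (intro exI[of _ J]) simp
qed

lemma m_basis_card:
  assumes M: "matroid E indep" and B: "basis E indep B"
  shows "card B = rank indep E"
proof -
  note fin = m_parts(1)[OF M] and sub = m_parts(2)[OF M] and emp = m_parts(3)[OF M]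
    and aug = m_parts(5)[OF M]
  have iB: "indep B" and mB: "\<forall>x\<in>E - B. \<not> indep (insert x B)" using B unfolding basis_def by blast+
  have le: "card B \<le> rank indep E" using rk_ge[OF fin sub iB] sub iB by blast
  have "\<not> card B < rank indep E"
  proof
    assume lt: "card B < rank indep E"
    obtain J0 where J0: "J0 \<subseteq> E" "indep J0" "card J0 = rank indep E"
      using rk_obtain[OF fin sub emp] by blast
    have "indep B \<and> indep J0 \<and> card B < card J0" using iB J0 lt by simp
    then obtain x where x: "x \<in> J0 - B" "indep (insert x B)"
      using aug[rule_format] by blast
    then show False using mB J0 by blast
  qed
  then show ?thesis using le by simp
qed

lemma m_basis_of:
  assumes M: "matroid E indep" and "indep B" "card B = rank indep E"
  shows "basis E indep B"
  unfolding basis_def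
proof (intro conjI ballI notI)
  show "indep B" by fact
  note fin = m_parts(1)[OF M] and sub = m_parts(2)[OF M]
  fix x assume x: "x \<in> E - B" and ix: "indep (insert x B)"
  have "card (insert x B) \<le> rank indep E" using rk_ge[OF fin sub ix] sub ix by blast
  moreover have "B \<subseteq> E" using sub assms(2) by blast
  then have "finite B" using fin by (rule finite_subset)
  ultimately show False using x assms(3) by simp
qed

lemma dual_facts:
  assumes M: "matroid E indep"
  shows "finite E" "\<forall>I. dual_indep E indep I \<longrightarrow> I \<subseteq> E" "dual_indep E indep {}"
    "\<forall>I J. dual_indep E indep J \<and> I \<subseteq> J \<longrightarrow> dual_indep E indep I"
proof -
  show fin: "finite E" by (rule m_parts(1)[OF M])
  show "\<forall>I. dual_indep E indep I \<longrightarrow> I \<subseteq> E" unfolding dual_indep_def by blast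
  note sub = m_parts(2)[OF M] and emp = m_parts(3)[OF M]
  obtain B where "B \<subseteq> E" "indep B" "card B = rank indep E" using rk_obtain[OF fin sub emp] by blast
  then have "basis E indep B" using m_basis_of[OF M] by blast
  then show "dual_indep E indep {}" unfolding dual_indep_def by blast
  show "\<forall>I J. dual_indep E indep J \<and> I \<subseteq> J \<longrightarrow> dual_indep E indep I"
    unfolding dual_indep_def by blast
qed

lemma dual_formula:
  assumes M: "matroid E indep" and S: "S \<subseteq> E"
  shows "rank (dual_indep E indep) S + rank indep E = card S + rank indep (E - S)"
proof -
  note fin = m_parts(1)[OF M] and sub = m_parts(2)[OF M] and emp = m_parts(3)[OF M]
    and down = m_parts(4)[OF M]
  note D = dual_facts[OF M]
  have fS: "finite S" using S fin by (rule finite_subset)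
  have ge: "card S + rank indep (E - S) \<le> rank (dual_indep E indep) S + rank indep E"
  proof -
    obtain I where I: "I \<subseteq> E - S" "indep I" "card I = rank indep (E - S)"
      using rk_obtain[OF fin sub emp, of "E - S"] by blast
    have "I \<subseteq> E" using I(1) by blast
    from m_extend[OF M I(2) this]
    obtain B where B: "I \<subseteq> B" "B \<subseteq> E" "indep B" "card B = rank indep E"
      by blast
    have bB: "basis E indep B" using m_basis_of[OF M B(3,4)] .
    have "dual_indep E indep (S - B)" unfolding dual_indep_def using S bB by blast
    then have c1: "card (S - B) \<le> rank (dual_indep E indep) S" by (rule rk_ge[OF D(1,2)]) blast
    have fB: "finite B" using B(2) fin by (rule finite_subset)
    have c2: "card S = card (B \<inter> S) + card (S - B)" using card_Int_Diff[OF fS, of B] by (simp add: Int_commute)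
    have c3: "card B = card (B \<inter> S) + card (B - S)" by (rule card_Int_Diff[OF fB])
    have "I \<subseteq> B - S" using I(1) B(1) by blast
    then have c4: "card I \<le> card (B - S)" using finite_Diff[OF fB] by (intro card_mono) auto
    show ?thesis using c1 c2 c3 c4 I(3) B(4) by linarith
  qed
  have le: "rank (dual_indep E indep) S + rank indep E \<le> card S + rank indep (E - S)"
  proof -
    obtain J where J: "J \<subseteq> S" "dual_indep E indep J" "card J = rank (dual_indep E indep) S"
      using rk_obtain[OF D(1-3)] by blast
    obtain B where B: "basis E indep B" "J \<inter> B = {}" using J(2) unfolding dual_indep_def by blast
    have cB: "card B = rank indep E" by (rule m_basis_card[OF M B(1)])
    have iB: "indep B" using B(1) unfolding basis_def by blast
    have BE: "B \<subseteq> E" using sub iB by blast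
    have fB: "finite B" using BE fin by (rule finite_subset)
    have "indep (B - S)" using down[rule_format, of B "B - S"] iB by blast
    then have c1: "card (B - S) \<le> rank indep (E - S)" by (rule rk_ge[OF fin sub]) (use BE in blast)
    have "B \<inter> S \<subseteq> S - J" using B(2) by blast
    then have c2: "card (B \<inter> S) \<le> card (S - J)" using finite_Diff[OF fS] by (intro card_mono) auto
    have c3: "card (S - J) = card S - card J" by (rule card_Diff_subset) (use finite_subset[OF J(1) fS] J(1) in auto)
    have c4: "card J \<le> card S" by (rule card_mono[OF fS J(1)])
    have c5: "card B = card (B \<inter> S) + card (B - S)" by (rule card_Int_Diff[OF fB])
    show ?thesis using c1 c2 c3 c4 c5 cB J(3) by linarith
  qed
  show ?thesis using ge le by linarith
qed


lemma ncl_lemma: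
  assumes M: "matroid E indep"
    and pres: "\<forall>I. dual_indep E indep I \<longleftrightarrow> (I \<subseteq> E \<and> partial_transversal A r I)"
    and FE: "F \<subseteq> E"
    and H: "\<forall>x\<in>F. rank (dual_indep E indep) F \<le> rank (dual_indep E indep) (F - {x})"
  shows "card (nb A r F) \<le> rank (dual_indep E indep) F"
proof -
  note fin = m_parts(1)[OF M]
  note D = dual_facts[OF M]
  have ptiff: "dual_indep E indep I \<longleftrightarrow> partial_transversal A r I" if "I \<subseteq> E" for I
    using pres that by blast
  have fF: "finite F" using FE fin by (rule finite_subset)
  have nc: "\<forall>x\<in>F. \<forall>J\<subseteq>F. partial_transversal A r J \<longrightarrow>
             (\<exists>J'\<subseteq>F-{x}. partial_transversal A r J' \<and> card J \<le> card J')"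
  proof (intro ballI allI impI)
    fix x J assume x: "x \<in> F" and JF: "J \<subseteq> F" and pJ: "partial_transversal A r J"
    have "J \<subseteq> E" using JF FE by blast
    then have "dual_indep E indep J" using ptiff pJ by simp
    then have "card J \<le> rank (dual_indep E indep) F" by (rule rk_ge[OF D(1,2) _ JF])
    also have "\<dots> \<le> rank (dual_indep E indep) (F - {x})" using H[rule_format, OF x] .
    finally have c: "card J \<le> rank (dual_indep E indep) (F - {x})" .
    obtain J' where J': "J' \<subseteq> F - {x}" "dual_indep E indep J'"
        "card J' = rank (dual_indep E indep) (F - {x})"
      by (rule rk_obtainE[OF D(1-3)])
    have "J' \<subseteq> E" using J'(1) FE by blast
    then have "partial_transversal A r J'" using ptiff J'(2) by simp
    then show "\<exists>J'\<subseteq>F-{x}. partial_transversal A r J' \<and> card J \<le> card J'"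
      using J'(1) J'(3) c by (intro exI[of _ J'] conjI) simp_all
  qed
  obtain J where J: "J \<subseteq> F" "partial_transversal A r J" "card (nb A r F) \<le> card J"
    using cyc[OF fF nc] by blast
  have "J \<subseteq> E" using J(1) FE by blast
  then have "dual_indep E indep J" using ptiff J(2) by simp
  then have "card J \<le> rank (dual_indep E indep) F" by (rule rk_ge[OF D(1,2) _ J(1)])
  then show ?thesis using J(3) by linarith
qed

theorem lemma3p2:
  fixes E :: "'a set" and indep :: "'a set \<Rightarrow> bool" and A :: "nat \<Rightarrow> 'a set"
    and r :: nat and e :: 'a and X :: "'a set"
  assumes M: "matroid E indep"
    and r_def: "r = rank (dual_indep E indep) E"
    and A_sub: "\<forall>i<r. A i \<subseteq> E"
    and pres: "\<forall>I. dual_indep E indep I \<longleftrightarrow> (I \<subseteq> E \<and> partial_transversal A r I)"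
    and e: "e \<in> E"
    and X: "X \<subseteq> E - {e}"
  shows "int (rank (del_indep indep e) X)
           \<le> int (card X) - int (card (calA A r X))
              - max (int (card (calAe A r e (insert e X))) - 1) 0
         \<and> (cyclic_flat (E - {e}) (del_indep indep e) X \<longrightarrow>
             int (rank (del_indep indep e) X)
               = int (card X) - int (card (calA A r X))
                  - max (int (card (calAe A r e (insert e X))) - 1) 0)"
proof -
  define rM where "rM = rank indep"
  define rN where "rN = rank (dual_indep E indep)"
  note fin = m_parts(1)[OF M] and sub = m_parts(2)[OF M] and emp = m_parts(3)[OF M]
  note D = dual_facts[OF M]
  define Y where "Y = E - X"
  have XE: "X \<subseteq> E" and eX: "e \<notin> X" using X by auto
  have EY: "E - Y = X" using XE by (auto simp: Y_def)
  have YE: "Y \<subseteq> E" by (auto simp: Y_def)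
  have eY: "e \<in> Y" using e eX by (simp add: Y_def)
  have fX: "finite X" using XE fin by (rule finite_subset)
  have fY: "finite Y" using YE fin by (rule finite_subset)
  have ptiff: "dual_indep E indep I \<longleftrightarrow> partial_transversal A r I" if "I \<subseteq> E" for I
    using pres that by blast
  have delr: "rank (del_indep indep e) S = rM S" if "e \<notin> S" for S
  proof -
    have "{I. I \<subseteq> S \<and> del_indep indep e I} = {I. I \<subseteq> S \<and> indep I}"
      using that by (auto simp: del_indep_def)
    then show ?thesis by (simp add: rank_def rM_def)
  qed
  have rM0: "rM {} = 0"
  proof -
    have "{I. I \<subseteq> {} \<and> indep I} = {{}}" using emp by auto
    then show ?thesis unfolding rM_def rank_def by simp
  qed
  have f1: "rN Y + rM E = card Y + rM X"
  proof -
    have "rank (dual_indep E indep) Y + rank indep E = card Y + rank indep (E - Y)"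
      by (rule dual_formula[OF M YE])
    then show ?thesis unfolding rN_def rM_def EY .
  qed
  have f2: "r + rM E = card E"
  proof -
    have "rank (dual_indep E indep) E + rank indep E = card E + rank indep (E - E)"
      by (rule dual_formula[OF M subset_refl])
    then have "r + rM E = card E + rM {}" unfolding rM_def r_def by simp
    then show ?thesis using rM0 by simp
  qed
  have cY: "card Y + card X = card E"
  proof -
    have "card Y = card E - card X" unfolding Y_def by (rule card_Diff_subset[OF fX XE])
    moreover have "card X \<le> card E" by (rule card_mono[OF fin XE])
    ultimately show ?thesis by simp
  qed
  have keyn: "rM X + r = card X + rN Y" using f1 f2 cY by linarith
  then have "int (rM X + r) = int (card X + rN Y)" by (rule arg_cong)
  then have key: "int (rM X) = int (card X) + int (rN Y) - int r" by simp
  define a where "a = card (calA A r X)"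
  define k where "k = card (calAe A r e (insert e X))"
  have cAsub: "calA A r X \<subseteq> {..<r}" by (auto simp: calA_def)
  have cAesub: "calAe A r e (insert e X) \<subseteq> {..<r}" by (auto simp: calAe_def calA_def)
  have disj: "calA A r X \<inter> calAe A r e (insert e X) = {}" using eX by (auto simp: calA_def calAe_def)
  have fA: "finite (calA A r X)" by (rule finite_subset[OF cAsub]) simp
  have fAe: "finite (calAe A r e (insert e X))" by (rule finite_subset[OF cAesub]) simp
  have cU: "card (calA A r X \<union> calAe A r e (insert e X)) = a + k"
    using card_Un_disjoint[OF fA fAe disj] by (simp add: a_def k_def)
  have card1: "card ({..<r} - calA A r X) = r - a"
    using card_Diff_subset[OF fA cAsub] by (simp add: a_def)
  have Usub: "calA A r X \<union> calAe A r e (insert e X) \<subseteq> {..<r}" using cAsub cAesub by blast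
  have card2: "card ({..<r} - (calA A r X \<union> calAe A r e (insert e X))) = r - (a + k)"
    using card_Diff_subset[OF finite_UnI[OF fA fAe] Usub] cU by simp
  have akr: "a + k \<le> r" using card_mono[OF _ Usub] cU by simp
  obtain J where J: "J \<subseteq> Y" "dual_indep E indep J" "card J = rN Y"
    unfolding rN_def by (rule rk_obtainE[OF D(1-3)])
  have JE: "J \<subseteq> E" using J(1) YE by blast
  have "partial_transversal A r J" using ptiff[OF JE] J(2) by simp
  then obtain f where f: "inj_on f J" "\<forall>x\<in>J. f x < r \<and> x \<in> A (f x)"
    unfolding partial_transversal_def by blast
  have im1: "f ` J \<subseteq> {..<r} - calA A r X" using f(2) J(1) by (auto simp: calA_def Y_def)
  have im2: "f ` (J - {e}) \<subseteq> {..<r} - (calA A r X \<union> calAe A r e (insert e X))"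
    using f(2) J(1) by (auto simp: calA_def calAe_def Y_def)
  have fJ: "finite J" using JE fin by (rule finite_subset)
  have "card (f ` J) \<le> r - a" using card_mono[OF _ im1] card1 by simp
  then have u1: "rN Y \<le> r - a" using card_image[OF f(1)] J(3) by simp
  have "card (f ` (J - {e})) \<le> r - (a + k)" using card_mono[OF _ im2] card2 by simp
  moreover have "card (f ` (J - {e})) = card (J - {e})"
    by (rule card_image[OF inj_on_subset[OF f(1)]]) blast
  moreover have "card J \<le> card (J - {e}) + 1" by (simp add: card_Diff_singleton_if) arith
  ultimately have u2: "rN Y \<le> r - (a + k) + 1" using J(3) by linarith
  have part1: "int (rank (del_indep indep e) X)
           \<le> int (card X) - int a - max (int k - 1) 0"
  proof -
    have "int (rN Y) + max (int k - 1) 0 \<le> int r - int a"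
      using u1 u2 akr by (auto simp: max_def)
    then show ?thesis using key delr[OF eX] by simp
  qed
  have ncl: "card (nb A r F) \<le> rN F" if FE: "F \<subseteq> E" and H: "\<forall>x\<in>F. rN F \<le> rN (F - {x})" for F
    using ncl_lemma[OF M pres FE H[unfolded rN_def]] unfolding rN_def .
  have part2: "int (rank (del_indep indep e) X) \<ge> int (card X) - int a - max (int k - 1) 0"
    if cf: "cyclic_flat (E - {e}) (del_indep indep e) X"
  proof -
    have "flat (E - {e}) (del_indep indep e) X" using cf unfolding cyclic_flat_def by (rule conjunct1)
    then have flat: "\<forall>y\<in>(E - {e}) - X. rank (del_indep indep e) (insert y X) > rank (del_indep indep e) X"
      unfolding flat_def by (rule conjunct2)
    have nc1: "rN Y \<le> rN (Y - {y})" if y: "y \<in> Y" "y \<noteq> e" for y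
    proof -
      have "y \<in> (E - {e}) - X" using y by (auto simp: Y_def)
      then have "rank (del_indep indep e) (insert y X) > rank (del_indep indep e) X" by (rule flat[rule_format])
      moreover have "e \<notin> insert y X" using y eX by simp
      ultimately have lt: "rM X < rM (insert y X)" using delr[OF eX] delr[of "insert y X"] by simp
      have YyE: "Y - {y} \<subseteq> E" using YE by blast
      have "E - (Y - {y}) = insert y X" using y XE by (auto simp: Y_def)
      then have g: "rN (Y - {y}) + rM E = card (Y - {y}) + rM (insert y X)"
        using dual_formula[OF M YyE] by (simp add: rN_def rM_def)
      have "card (Y - {y}) + 1 = card Y" using card_Diff1_less[OF fY y(1)] y(1) fY by simp
      then show ?thesis using g f1 lt by linarith
    qed
    have nbY: "nb A r Y = {..<r} - calA A r X"
    proof (rule set_eqI)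
      fix i
      show "i \<in> nb A r Y \<longleftrightarrow> i \<in> {..<r} - calA A r X"
      proof (cases "i < r")
        case True
        then have "A i \<subseteq> E" using A_sub by blast
        then show ?thesis using True by (auto simp: nb_def calA_def Y_def)
      qed (simp add: nb_def calA_def)
    qed
    have nbZ: "nb A r (Y - {e}) = {..<r} - (calA A r X \<union> calAe A r e (insert e X))"
    proof (rule set_eqI)
      fix i
      show "i \<in> nb A r (Y - {e}) \<longleftrightarrow> i \<in> {..<r} - (calA A r X \<union> calAe A r e (insert e X))"
      proof (cases "i < r")
        case True
        then have "A i \<subseteq> E" using A_sub by blast
        then show ?thesis using True by (auto simp: nb_def calA_def calAe_def Y_def)
      qed (simp add: nb_def calA_def calAe_def)
    qed
    have lb: "int r - int a - max (int k - 1) 0 \<le> int (rN Y)"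
    proof (cases "rN Y \<le> rN (Y - {e})")
      case True
      have "\<forall>x\<in>Y. rN Y \<le> rN (Y - {x})"
      proof
        fix x assume "x \<in> Y"
        then show "rN Y \<le> rN (Y - {x})" using True nc1[of x] by (cases "x = e") simp_all
      qed
      then have "card (nb A r Y) \<le> rN Y" by (rule ncl[OF YE])
      then have "r - a \<le> rN Y" using nbY card1 by simp
      then have "int (r - a) \<le> int (rN Y)" by (rule of_nat_mono)
      moreover have "int (r - a) = int r - int a" using akr by (simp add: of_nat_diff)
      moreover have "0 \<le> max (int k - 1) 0" by (rule max.cobounded2)
      ultimately show ?thesis by linarith
    next
      case False
      define Z where "Z = Y - {e}"
      have ZE: "Z \<subseteq> E" using YE by (auto simp: Z_def)
      have YZ: "Y = insert e Z" using eY by (auto simp: Z_def)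
      have "\<forall>x\<in>Z. rN Z \<le> rN (Z - {x})"
      proof
        fix x assume x: "x \<in> Z"
        have xY: "x \<in> Y" "x \<noteq> e" using x by (auto simp: Z_def)
        have h1: "rN Y \<le> rN (Y - {x})" by (rule nc1[OF xY])
        have eq: "Y - {x} = insert e (Z - {x})" using x eY by (auto simp: Z_def)
        have "rN (insert e (Z - {x})) \<le> rN (Z - {x}) + 1"
          unfolding rN_def by (rule rk_insert[OF D])
        then have h2: "rN (Y - {x}) \<le> rN (Z - {x}) + 1" by (simp only: eq)
        have h3: "rN Z < rN Y" using False by (simp add: Z_def)
        show "rN Z \<le> rN (Z - {x})" using h1 h2 h3 by linarith
      qed
      then have "card (nb A r Z) \<le> rN Z" by (rule ncl[OF ZE])
      then have "r - (a + k) \<le> rN Z" using nbZ card2 by (simp add: Z_def)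
      moreover have "rN Z < rN Y" using False by (simp add: Z_def)
      ultimately have "r - (a + k) + 1 \<le> rN Y" by linarith
      then have "int (r - (a + k) + 1) \<le> int (rN Y)" by (rule of_nat_mono)
      moreover have "int (r - (a + k) + 1) = int r - int a - int k + 1" using akr by (simp add: of_nat_diff)
      moreover have "int k - 1 \<le> max (int k - 1) 0" by (rule max.cobounded1)
      ultimately show ?thesis by linarith
    qed
    then show ?thesis using key delr[OF eX] by simp
  qed
  show ?thesis using part1 part2 by (simp add: a_def k_def)
qed

end
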